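(* Let $\varepsilon>0$, $p\in(0,1/2)$ and $R=1-H(p)-\varepsilon$. Let $\mathcal{C}\subseteq\mathbb{F}_2^n$ be a random linear code of rate $R$. Then with probability $1-\exp(-\Omega_\varepsilon(n))$, the code $\mathcal{C}$ is $\left(p,\frac{H(p)}{\varepsilon}+2\right)$-list decodable.
   Context: $H(p)=-p\log_2 p-(1-p)\log_2(1-p)$ is the binary entropy function. For $x,y\in\mathbb{F}_2^n$, $\Delta(x,y)$ is the Hamming distance (number of coordinates in which $x,y$ differ), and $\mathcal{B}(x,r)=\{y\in\mathbb{F}_2^n:\Delta(x,y)\le r\}$. For a code $\mathcal{C}\subseteq\mathbb{F}_2^n$, the list size at $x$ is $L_{\mathcal{C}}(x)=|\mathcal{B}(x,pn)\cap\mathcal{C}|$; $\mathcal{C}$ is $(p,L)$-list decodable if $L_{\mathcal{C}}(x)\le L$ for all $x\in\mathbb{F}_2^n$. A random linear code of rate $R$ is $\mathcal{C}=\mathrm{span}(b_1,\dots,b_k)$ where $k=Rn$ (assumed an integer) and $b_1,\dots,b_k$ are independent uniformly random vectors in $\mathbb{F}_2^n$. The $\Omega_\varepsilon(\cdot)$ hides a constant depending only on $\varepsilon$ (asymptotics as $n\to\infty$). *)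

theory Defs
  imports "HOL-Probability.Probability"
begin

text \<open>Vectors of F_2^n are boolean lists of length n (True = 1).\<close>

definition bin_entropy :: "real \<Rightarrow> real" where
  "bin_entropy p = - p * log 2 p - (1 - p) * log 2 (1 - p)"

definition vecs :: "nat \<Rightarrow> bool list set" where
  "vecs n = {x. length x = n}"

definition hdist :: "bool list \<Rightarrow> bool list \<Rightarrow> nat" where
  "hdist x y = card {i. i < length x \<and> x ! i \<noteq> y ! i}"

definition hball :: "nat \<Rightarrow> bool list \<Rightarrow> real \<Rightarrow> bool list set" where
  "hball n x r = {y \<in> vecs n. real (hdist x y) \<le> r}"

definition lin_span :: "nat \<Rightarrow> bool list list \<Rightarrow> bool list set" where
  "lin_span n bs = {map (\<lambda>j. odd (card {i \<in> S. bs ! i ! j})) [0..<n] | S. S \<subseteq> {0..<length bs}}"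

definition list_size :: "nat \<Rightarrow> real \<Rightarrow> bool list set \<Rightarrow> bool list \<Rightarrow> nat" where
  "list_size n p C x = card (hball n x (p * real n) \<inter> C)"

definition list_decodable :: "nat \<Rightarrow> real \<Rightarrow> real \<Rightarrow> bool list set \<Rightarrow> bool" where
  "list_decodable n p L C \<longleftrightarrow> (\<forall>x \<in> vecs n. real (list_size n p C x) \<le> L)"

definition random_gens :: "nat \<Rightarrow> nat \<Rightarrow> bool list list pmf" where
  "random_gens n k = pmf_of_set {bs. length bs = k \<and> (\<forall>b \<in> set bs. b \<in> vecs n)}"

end

theory Submission imports Defs "HOL-Real_Asymp.Real_Asymp" begin

definition xorv :: "bool list \<Rightarrow> bool list \<Rightarrow> bool list" where
  "xorv x y = map2 (\<noteq>) x y"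

lemma length_xorv[simp]: "length (xorv x y) = min (length x) (length y)"
  by (simp add: xorv_def)

lemma nth_xorv[simp]: "i < length x \<Longrightarrow> i < length y \<Longrightarrow> xorv x y ! i = (x ! i \<noteq> y ! i)"
  by (simp add: xorv_def)

lemma vecs_len[simp]: "x \<in> vecs n \<longleftrightarrow> length x = n" by (simp add: vecs_def)

lemma xorv_vecs[simp]: "x \<in> vecs n \<Longrightarrow> y \<in> vecs n \<Longrightarrow> xorv x y \<in> vecs n" by simp

lemma xorv_comm: "length x = length y \<Longrightarrow> xorv x y = xorv y x"
  by (auto simp: list_eq_iff_nth_eq)

lemma xorv_assoc: "length x = length y \<Longrightarrow> length y = length z \<Longrightarrow> xorv (xorv x y) z = xorv x (xorv y z)"
  by (auto simp: list_eq_iff_nth_eq)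

lemma xorv_cancel: "length x = length y \<Longrightarrow> xorv (xorv x y) y = x"
  by (auto simp: list_eq_iff_nth_eq)

lemma xorv_cancel2: "length x = length y \<Longrightarrow> xorv y (xorv y x) = x"
  by (auto simp: list_eq_iff_nth_eq)

lemma xorv_self: "xorv x x = replicate (length x) False"
  by (auto simp: list_eq_iff_nth_eq)

lemma xorv_L1: "length u = length b \<Longrightarrow> length v = length b \<Longrightarrow> xorv u (xorv b v) = xorv b (xorv u v)"
  by (auto simp: list_eq_iff_nth_eq)
lemma xorv_L2: "length u = length b \<Longrightarrow> length v = length b \<Longrightarrow> xorv (xorv b u) v = xorv b (xorv u v)"
  by (auto simp: list_eq_iff_nth_eq)
lemma xorv_L3: "length u = length b \<Longrightarrow> length v = length b \<Longrightarrow> xorv (xorv b u) (xorv b v) = xorv u v"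
  by (auto simp: list_eq_iff_nth_eq)
lemma xorv_inj: "length u = length b \<Longrightarrow> length v = length b \<Longrightarrow> xorv b u = xorv b v \<Longrightarrow> u = v"
  by (auto simp: list_eq_iff_nth_eq)

lemma finite_vecs[simp]: "finite (vecs n)"
proof -
  have "vecs n = {xs. set xs \<subseteq> (UNIV::bool set) \<and> length xs = n}" by (auto simp: vecs_def)
  then show ?thesis using finite_lists_length_eq[of "UNIV::bool set" n] by simp
qed

lemma card_vecs: "card (vecs n) = 2 ^ n"
proof -
  have "vecs n = {xs. set xs \<subseteq> (UNIV::bool set) \<and> length xs = n}" by (auto simp: vecs_def)
  then show ?thesis using card_lists_length_eq[of "UNIV::bool set" n] by simp
qed

lemma xorv_bij: "b \<in> vecs n \<Longrightarrow> bij_betw (\<lambda>x. xorv x b) (vecs n) (vecs n)"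
  apply (rule bij_betwI[where g="\<lambda>x. xorv x b"])
  by (auto simp: xorv_cancel)

lemma hdist_xorv_both:
  assumes "length x = n" "length y = n" "length c = n"
  shows "hdist (xorv x c) (xorv y c) = hdist x y"
  unfolding hdist_def using assms by (intro arg_cong[where f=card]) auto

lemma hdist_shift:
  assumes "length x = n" "length b = n" "length c = n"
  shows "hdist x (xorv b c) = hdist (xorv x b) c"
  unfolding hdist_def using assms by (intro arg_cong[where f=card]) auto

lemma hdist_le: "hdist x y \<le> length x"
proof -
  have "{i. i < length x \<and> x ! i \<noteq> y ! i} \<subseteq> {..<length x}" by auto
  then show ?thesis unfolding hdist_def by (metis card_lessThan card_mono finite_lessThan)
qed

lemma hdist_Cons: "hdist (a # x) (b # y) = (if a \<noteq> b then 1 else 0) + hdist x y"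
proof -
  have e: "{i. i < length (a#x) \<and> (a#x) ! i \<noteq> (b#y) ! i} =
     (if a \<noteq> b then {0} else {}) \<union> Suc ` {i. i < length x \<and> x ! i \<noteq> y ! i}"
  proof (rule set_eqI)
    fix i show "i \<in> {i. i < length (a#x) \<and> (a#x) ! i \<noteq> (b#y) ! i} \<longleftrightarrow>
      i \<in> (if a \<noteq> b then {0} else {}) \<union> Suc ` {i. i < length x \<and> x ! i \<noteq> y ! i}"
      by (cases i) auto
  qed
  have "card ((if a \<noteq> b then {0} else {}) \<union> Suc ` {i. i < length x \<and> x ! i \<noteq> y ! i})
     = card (if a \<noteq> b then {0::nat} else {}) + card (Suc ` {i. i < length x \<and> x ! i \<noteq> y ! i})"
    by (rule card_Un_disjoint) auto
  also have "card (Suc ` {i. i < length x \<and> x ! i \<noteq> y ! i}) = hdist x y"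
    unfolding hdist_def by (simp add: card_image)
  finally show ?thesis using e unfolding hdist_def by simp
qed
lemma hdist_sym: "length x = length y \<Longrightarrow> hdist x y = hdist y x"
  unfolding hdist_def by (intro arg_cong[where f=card]) auto

lemma hdist_self: "hdist x x = 0" unfolding hdist_def by simp

section \<open>Span\<close>

definition spv :: "nat \<Rightarrow> bool list list \<Rightarrow> nat set \<Rightarrow> bool list" where
  "spv n bs S = map (\<lambda>j. odd (card {i \<in> S. bs ! i ! j})) [0..<n]"

lemma lin_span_spv: "lin_span n bs = {spv n bs S | S. S \<subseteq> {0..<length bs}}"
  unfolding lin_span_def spv_def by simp

lemma lin_span_Nil: "lin_span n [] = {replicate n False}"
  unfolding lin_span_spv spv_def by (auto simp: map_replicate_const)

lemma spv_snoc1: "S \<subseteq> {0..<length bs} \<Longrightarrow> spv n (bs @ [b]) S = spv n bs S"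
  unfolding spv_def
  by (intro map_cong refl arg_cong[where f=odd] arg_cong[where f=card]) (auto simp: nth_append)

lemma spv_snoc2:
  assumes "S \<subseteq> {0..<length bs}" "length b = n"
  shows "spv n (bs @ [b]) (insert (length bs) S) = xorv b (spv n bs S)"
proof (rule nth_equalityI)
  show "length (spv n (bs @ [b]) (insert (length bs) S)) = length (xorv b (spv n bs S))"
    using assms by (simp add: spv_def)
next
  fix j assume j: "j < length (spv n (bs @ [b]) (insert (length bs) S))"
  then have jn: "j < n" by (simp add: spv_def)
  have nS: "length bs \<notin> S" using assms by auto
  have e1: "{i. (i = length bs \<or> i \<in> S) \<and> (bs @ [b]) ! i ! j} =
        (if b ! j then insert (length bs) {i \<in> S. bs ! i ! j} else {i \<in> S. bs ! i ! j})"
    using assms by (auto simp: nth_append)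
  have fin: "finite {i \<in> S. bs ! i ! j}" by (rule finite_subset[where B="{0..<length bs}"]) (use assms(1) in auto)
  show "spv n (bs @ [b]) (insert (length bs) S) ! j = xorv b (spv n bs S) ! j"
    using jn assms nS fin by (cases "b ! j") (simp_all add: spv_def e1)
qed

lemma lin_span_snoc:
  assumes "length b = n"
  shows "lin_span n (bs @ [b]) = lin_span n bs \<union> xorv b ` lin_span n bs"
proof
  show "lin_span n (bs @ [b]) \<subseteq> lin_span n bs \<union> xorv b ` lin_span n bs"
  proof
    fix v assume "v \<in> lin_span n (bs @ [b])"
    then obtain S where S: "S \<subseteq> {0..<Suc (length bs)}" "v = spv n (bs @ [b]) S"
      by (auto simp: lin_span_spv)
    show "v \<in> lin_span n bs \<union> xorv b ` lin_span n bs"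
    proof (cases "length bs \<in> S")
      case False
      then have "S \<subseteq> {0..<length bs}" using S(1) by (auto simp: less_Suc_eq)
      then show ?thesis using S(2) spv_snoc1 by (auto simp: lin_span_spv)
    next
      case True
      have S0: "S - {length bs} \<subseteq> {0..<length bs}" using S(1) by (auto simp: less_Suc_eq)
      have "S = insert (length bs) (S - {length bs})" using True by auto
      then have "v = xorv b (spv n bs (S - {length bs}))" using S(2) spv_snoc2[OF S0 assms] by metis
      then show ?thesis using S0 by (auto simp: lin_span_spv)
    qed
  qed
next
  show "lin_span n bs \<union> xorv b ` lin_span n bs \<subseteq> lin_span n (bs @ [b])"
  proof
    fix v assume "v \<in> lin_span n bs \<union> xorv b ` lin_span n bs"
    then show "v \<in> lin_span n (bs @ [b])"
    proof
      assume "v \<in> lin_span n bs"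
      then obtain S where S: "S \<subseteq> {0..<length bs}" "v = spv n bs S" by (auto simp: lin_span_spv)
      then have "v = spv n (bs @ [b]) S" using spv_snoc1 by metis
      moreover have "S \<subseteq> {0..<length (bs @ [b])}" using S by auto
      ultimately show ?thesis by (auto simp: lin_span_spv)
    next
      assume "v \<in> xorv b ` lin_span n bs"
      then obtain S where S: "S \<subseteq> {0..<length bs}" "v = xorv b (spv n bs S)" by (auto simp: lin_span_spv)
      then have "v = spv n (bs @ [b]) (insert (length bs) S)" using spv_snoc2[OF S(1) assms] by metis
      moreover have "insert (length bs) S \<subseteq> {0..<length (bs @ [b])}" using S by auto
      ultimately show ?thesis unfolding lin_span_spv by blast
    qed
  qed
qed

lemma lin_span_vecs: "lin_span n bs \<subseteq> vecs n"
  unfolding lin_span_spv spv_def by auto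

lemma finite_lin_span[simp]: "finite (lin_span n bs)"
  using finite_subset[OF lin_span_vecs] by simp

lemma zero_lin_span: "replicate n False \<in> lin_span n bs"
proof -
  have "spv n bs {} = replicate n False" by (simp add: spv_def map_replicate_const)
  moreover have "{} \<subseteq> {0..<length bs}" by simp
  ultimately show ?thesis unfolding lin_span_spv by (intro CollectI exI[of _ "{}"]) simp
qed

definition closedx :: "bool list set \<Rightarrow> bool" where
  "closedx C \<longleftrightarrow> (\<forall>u\<in>C. \<forall>v\<in>C. xorv u v \<in> C)"

lemma lin_span_closed: "set bs \<subseteq> vecs n \<Longrightarrow> closedx (lin_span n bs)"
proof (induction bs rule: rev_induct)
  case Nil
  then show ?case by (simp add: lin_span_Nil closedx_def xorv_self)
next
  case (snoc b bs)
  then have IH: "closedx (lin_span n bs)" and bn: "length b = n" by auto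
  let ?C = "lin_span n bs"
  have V: "\<And>u. u \<in> ?C \<Longrightarrow> length u = n" using lin_span_vecs by (meson subsetD vecs_len)
  show ?case unfolding lin_span_snoc[OF bn] closedx_def
  proof (intro ballI)
    fix u v assume u: "u \<in> ?C \<union> xorv b ` ?C" and v: "v \<in> ?C \<union> xorv b ` ?C"
    show "xorv u v \<in> ?C \<union> xorv b ` ?C"
    proof (cases "u \<in> ?C")
      case uC: True
      show ?thesis
      proof (cases "v \<in> ?C")
        case True then show ?thesis using IH uC by (auto simp: closedx_def)
      next
        case False
        then obtain v' where v': "v' \<in> ?C" "v = xorv b v'" using v by auto
        have "xorv u v = xorv b (xorv u v')"
          using V[OF uC] V[OF v'(1)] bn v'(2) xorv_L1 by simp
        then show ?thesis using IH uC v'(1) by (auto simp: closedx_def)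
      qed
    next
      case False
      then obtain u' where u': "u' \<in> ?C" "u = xorv b u'" using u by auto
      show ?thesis
      proof (cases "v \<in> ?C")
        case True
        have "xorv u v = xorv b (xorv u' v)"
          using V[OF True] V[OF u'(1)] bn u'(2) xorv_L2 by simp
        then show ?thesis using IH True u'(1) by (auto simp: closedx_def)
      next
        case False
        then obtain v' where v': "v' \<in> ?C" "v = xorv b v'" using v by auto
        have "xorv u v = xorv u' v'"
          using V[OF u'(1)] V[OF v'(1)] bn u'(2) v'(2) xorv_L3 by simp
        then show ?thesis using IH u'(1) v'(1) by (auto simp: closedx_def)
      qed
    qed
  qed
qed

lemma card_snoc:
  assumes "closedx C" "C \<subseteq> vecs n" "finite C" "b \<in> vecs n"
  shows "b \<in> C \<Longrightarrow> C \<union> xorv b ` C = C"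
    and "b \<notin> C \<Longrightarrow> card (C \<union> xorv b ` C) = 2 * card C"
proof -
  assume "b \<in> C" then show "C \<union> xorv b ` C = C" using assms(1) by (auto simp: closedx_def)
next
  assume bC: "b \<notin> C"
  have inj: "inj_on (xorv b) C"
  proof (rule inj_onI)
    fix u v assume "u \<in> C" "v \<in> C" "xorv b u = xorv b v"
    then show "u = v" using assms(2,4) xorv_inj[of u b v] by (auto simp del: vecs_len simp: vecs_def)
  qed
  have disj: "C \<inter> xorv b ` C = {}"
  proof (rule ccontr)
    assume "C \<inter> xorv b ` C \<noteq> {}"
    then obtain u v where uv: "u \<in> C" "v \<in> C" "u = xorv b v" by auto
    have "length v = length b" using uv assms(2,4) by (auto simp del: vecs_len simp: vecs_def)
    then have "xorv u v = b" using uv(3) xorv_cancel by simp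
    moreover have "xorv u v \<in> C" using uv assms(1) unfolding closedx_def by blast
    ultimately have "b \<in> C" by simp
    then show False using bC by simp
  qed
  have "card (C \<union> xorv b ` C) = card C + card (xorv b ` C)"
    using disj assms(3) by (simp add: card_Un_disjoint)
  then show "card (C \<union> xorv b ` C) = 2 * card C" using inj by (simp add: card_image)
qed

lemma card_lin_span: "set bs \<subseteq> vecs n \<Longrightarrow> card (lin_span n bs) \<le> 2 ^ length bs"
proof (induction bs rule: rev_induct)
  case Nil then show ?case by (simp add: lin_span_Nil)
next
  case (snoc b bs)
  then have bn: "length b = n" and IH: "card (lin_span n bs) \<le> 2 ^ length bs" by auto
  have "card (lin_span n (bs @ [b])) \<le> card (lin_span n bs) + card (xorv b ` lin_span n bs)"
    unfolding lin_span_snoc[OF bn] by (rule card_Un_le)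
  also have "\<dots> \<le> 2 * card (lin_span n bs)" using card_image_le[of "lin_span n bs" "xorv b"] by simp
  finally show ?case using IH by simp
qed

lemma card_lin_span_pos: "card (lin_span n bs) \<ge> 1"
proof -
  have "lin_span n bs \<noteq> {}" using zero_lin_span[of n bs] by blast
  then show ?thesis by (simp add: Suc_le_eq card_gt_0_iff)
qed

section \<open>list size\<close>

lemma finite_hball[simp]: "finite (hball n x r)"
  unfolding hball_def by (rule finite_subset[of _ "vecs n"]) (auto simp del: vecs_len)

lemma finite_hball_Int[simp]: "finite (hball n x r \<inter> C)"
  by simp

lemma ls_update:
  assumes "C \<subseteq> vecs n" "x \<in> vecs n" "b \<in> vecs n"
  shows "list_size n p (C \<union> xorv b ` C) x \<le> list_size n p C x + list_size n p C (xorv x b)"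
proof -
  let ?r = "p * real n"
  have sub: "hball n x ?r \<inter> (C \<union> xorv b ` C) \<subseteq> (hball n x ?r \<inter> C) \<union> xorv b ` (hball n (xorv x b) ?r \<inter> C)"
  proof
    fix y assume y: "y \<in> hball n x ?r \<inter> (C \<union> xorv b ` C)"
    show "y \<in> (hball n x ?r \<inter> C) \<union> xorv b ` (hball n (xorv x b) ?r \<inter> C)"
    proof (cases "y \<in> C")
      case True then show ?thesis using y by auto
    next
      case False
      then obtain c where c: "c \<in> C" "y = xorv b c" using y by auto
      have cn: "length c = n" using c assms(1) by auto
      have "hdist x y = hdist (xorv x b) c" using c(2) cn assms(2,3) hdist_shift by auto
      then have "c \<in> hball n (xorv x b) ?r" using y cn unfolding hball_def by auto
      then show ?thesis using c by auto
    qed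
  qed
  have "card (hball n x ?r \<inter> (C \<union> xorv b ` C)) \<le> card ((hball n x ?r \<inter> C) \<union> xorv b ` (hball n (xorv x b) ?r \<inter> C))"
    by (rule card_mono[OF _ sub]) auto
  also have "\<dots> \<le> card (hball n x ?r \<inter> C) + card (xorv b ` (hball n (xorv x b) ?r \<inter> C))"
    by (rule card_Un_le)
  also have "\<dots> \<le> card (hball n x ?r \<inter> C) + card (hball n (xorv x b) ?r \<inter> C)"
    by (intro add_left_mono card_image_le) simp
  finally show ?thesis unfolding list_size_def .
qed

lemma ls_translate:
  assumes "closedx C" "C \<subseteq> vecs n" "x \<in> vecs n" "c \<in> C"
  shows "list_size n p C x \<le> list_size n p C (xorv x c)"
proof -
  let ?r = "p * real n"
  have cn: "length c = n" using assms by auto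
  have inj: "inj_on (\<lambda>y. xorv y c) (vecs n)"
    using xorv_bij[of c n] cn bij_betw_imp_inj_on by auto
  have "(\<lambda>y. xorv y c) ` (hball n x ?r \<inter> C) \<subseteq> hball n (xorv x c) ?r \<inter> C"
  proof
    fix z assume "z \<in> (\<lambda>y. xorv y c) ` (hball n x ?r \<inter> C)"
    then obtain y where y: "y \<in> hball n x ?r" "y \<in> C" "z = xorv y c" by auto
    have yn: "length y = n" using y(1) unfolding hball_def by auto
    have "hdist (xorv x c) z = hdist x y" using hdist_xorv_both[of x n y c] y(3) yn cn assms(3) by auto
    then show "z \<in> hball n (xorv x c) ?r \<inter> C"
      using y yn cn assms(1,4) unfolding hball_def closedx_def by auto
  qed
  moreover have "inj_on (\<lambda>y. xorv y c) (hball n x ?r \<inter> C)"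
    by (rule inj_on_subset[OF inj]) (auto simp: hball_def simp del: vecs_len)
  ultimately show ?thesis unfolding list_size_def
    by (intro card_inj_on_le[where f="\<lambda>y. xorv y c"]) auto
qed

lemma ls_sum:
  assumes "C \<subseteq> vecs n" "\<And>c. c \<in> vecs n \<Longrightarrow> real (card (hball n c (p * real n))) \<le> U"
  shows "real (\<Sum>x\<in>vecs n. list_size n p C x) \<le> real (card C) * U"
proof -
  let ?r = "p * real n"
  have fC: "finite C" using assms(1) finite_subset finite_vecs by blast
  have "(\<Sum>x\<in>vecs n. list_size n p C x) = (\<Sum>x\<in>vecs n. \<Sum>c\<in>C. if real (hdist x c) \<le> ?r then 1 else 0)"
  proof (rule sum.cong[OF refl])
    fix x assume x: "x \<in> vecs n"
    have "hball n x ?r \<inter> C = {c \<in> C. real (hdist x c) \<le> ?r}" using assms(1) x unfolding hball_def by auto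
    then show "list_size n p C x = (\<Sum>c\<in>C. if real (hdist x c) \<le> ?r then 1 else 0)"
      unfolding list_size_def using fC by (simp add: sum.If_cases Int_def)
  qed
  also have "\<dots> = (\<Sum>c\<in>C. \<Sum>x\<in>vecs n. if real (hdist x c) \<le> ?r then 1 else 0)" by (rule sum.swap)
  also have "\<dots> = (\<Sum>c\<in>C. card (hball n c ?r))"
  proof (rule sum.cong[OF refl])
    fix c assume c: "c \<in> C"
    then have cn: "length c = n" using assms(1) by auto
    have "hball n c ?r = {x \<in> vecs n. real (hdist x c) \<le> ?r}" unfolding hball_def
      using cn hdist_sym by auto
    then show "(\<Sum>x\<in>vecs n. if real (hdist x c) \<le> ?r then 1 else 0) = card (hball n c ?r)"
      by (simp add: sum.If_cases Int_def del: vecs_len)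
  qed
  finally have "real (\<Sum>x\<in>vecs n. list_size n p C x) = (\<Sum>c\<in>C. real (card (hball n c ?r)))" by simp
  also have "\<dots> \<le> (\<Sum>c\<in>C. U)" using assms by (intro sum_mono) auto
  finally show ?thesis by simp
qed

section \<open>Ball size\<close>

lemma vecs_Suc: "vecs (Suc n) = (\<lambda>(a, y). a # y) ` (UNIV \<times> vecs n)"
  unfolding vecs_def by (auto simp: length_Suc_conv)

lemma weight_sum:
  fixes p :: real
  shows "length x = n \<Longrightarrow> (\<Sum>y\<in>vecs n. p ^ hdist x y * (1 - p) ^ (n - hdist x y)) = 1"
proof (induction x arbitrary: n)
  case Nil
  then have "vecs n = {[]}" by (auto simp: vecs_def)
  then show ?case using Nil by (simp add: hdist_def)
next
  case (Cons a x)
  then obtain m where m: "n = Suc m" "length x = m" by auto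
  have inj: "inj_on (\<lambda>(a, y). a # y) (UNIV \<times> vecs m)" by (auto simp: inj_on_def)
  let ?w = "\<lambda>y. p ^ hdist x y * (1 - p) ^ (m - hdist x y)"
  have t: "p ^ hdist (a # x) (b # y) * (1 - p) ^ (Suc m - hdist (a # x) (b # y))
        = (if a \<noteq> b then p else 1 - p) * ?w y" if "y \<in> vecs m" for b y
  proof -
    have "hdist x y \<le> m" using hdist_le m by metis
    then have "Suc m - hdist x y = Suc (m - hdist x y)" by simp
    then show ?thesis by (auto simp: hdist_Cons)
  qed
  have "(\<Sum>y\<in>vecs n. p ^ hdist (a # x) y * (1 - p) ^ (n - hdist (a # x) y))
      = (\<Sum>(b, y)\<in>UNIV \<times> vecs m. p ^ hdist (a # x) (b # y) * (1 - p) ^ (Suc m - hdist (a # x) (b # y)))"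
    unfolding m vecs_Suc by (subst sum.reindex[OF inj]) (simp add: case_prod_beta)
  also have "\<dots> = (\<Sum>(b, y)\<in>UNIV \<times> vecs m. (if a \<noteq> b then p else 1 - p) * ?w y)"
    by (rule sum.cong) (auto simp: t)
  also have "\<dots> = (\<Sum>b\<in>UNIV. \<Sum>y\<in>vecs m. (if a \<noteq> b then p else 1 - p) * ?w y)"
    by (simp add: sum.cartesian_product)
  also have "\<dots> = (\<Sum>b\<in>UNIV. (if a \<noteq> b then p else 1 - p))"
    using Cons.IH[OF m(2)] by (simp add: sum_distrib_left[symmetric])
  also have "\<dots> = 1" by (cases a) (simp_all add: UNIV_bool)
  finally show ?case .
qed

lemma weight_lb:
  fixes p :: real and d n :: nat
  assumes "0 < p" "p < 1/2" "real d \<le> p * real n" "d \<le> n"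
  shows "2 powr (- bin_entropy p * real n) \<le> p ^ d * (1 - p) ^ (n - d)"
proof -
  have p1: "0 < 1 - p" using assms by simp
  have "ln p < ln (1 - p)" using assms by simp
  then have key: "(real d - p * real n) * (ln p - ln (1 - p)) \<ge> 0"
    using assms(3) by (intro mult_nonpos_nonpos) auto
  have lhs: "2 powr (- bin_entropy p * real n) = exp (real n * (p * ln p + (1 - p) * ln (1 - p)))"
    unfolding bin_entropy_def powr_def log_def by (simp add: field_simps)
  have r1: "p ^ d = exp (real d * ln p)" using assms by (simp add: exp_of_nat_mult)
  have r2: "(1 - p) ^ (n - d) = exp (real (n - d) * ln (1 - p))" using p1 by (simp add: exp_of_nat_mult)
  have rhs: "p ^ d * (1 - p) ^ (n - d) = exp (real d * ln p + real (n - d) * ln (1 - p))"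
    unfolding r1 r2 exp_add by simp
  have alg: "\<And>r m a b. r * a + (m - r) * b - m * (p * a + (1 - p) * b) = (r - p * m) * (a - b)"
    by (simp add: algebra_simps)
  have "real d * ln p + real (n - d) * ln (1 - p) - real n * (p * ln p + (1 - p) * ln (1 - p))
      = (real d - p * real n) * (ln p - ln (1 - p))"
    using alg[of "real d" "ln p" "real n" "ln (1 - p)"] assms(4) by (simp only: of_nat_diff)
  then have "real n * (p * ln p + (1 - p) * ln (1 - p)) \<le> real d * ln p + real (n - d) * ln (1 - p)"
    using key by linarith
  then show ?thesis unfolding lhs rhs by simp
qed

lemma ball_bound:
  assumes "0 < p" "p < 1/2" "c \<in> vecs n"
  shows "real (card (hball n c (p * real n))) \<le> 2 powr (bin_entropy p * real n)"
proof -
  let ?B = "hball n c (p * real n)"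
  let ?w = "\<lambda>y. p ^ hdist c y * (1 - p) ^ (n - hdist c y)"
  have cn: "length c = n" using assms by simp
  have w0: "\<And>y. ?w y \<ge> 0" using assms by simp
  have "real (card ?B) * 2 powr (- bin_entropy p * real n) = (\<Sum>y\<in>?B. 2 powr (- bin_entropy p * real n))"
    by simp
  also have "\<dots> \<le> (\<Sum>y\<in>?B. ?w y)"
  proof (rule sum_mono)
    fix y assume "y \<in> ?B"
    then show "2 powr (- bin_entropy p * real n) \<le> ?w y"
      using assms hdist_le[of c y] cn by (intro weight_lb) (auto simp: hball_def)
  qed
  also have "\<dots> \<le> (\<Sum>y\<in>vecs n. ?w y)"
    by (rule sum_mono2) (auto simp: hball_def w0)
  also have "\<dots> = 1" using weight_sum[OF cn] .
  finally have "real (card ?B) * 2 powr (- bin_entropy p * real n) \<le> 1" .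
  then show ?thesis by (simp add: powr_minus field_simps)
qed

section \<open>Potential\<close>

definition Fq :: "real \<Rightarrow> nat \<Rightarrow> real" where
  "Fq q t = q ^ t - 1 - (q - 1) * real t"

lemma Fq_add: "Fq q (a + b) = Fq q a + Fq q b + (q ^ a - 1) * (q ^ b - 1)"
  unfolding Fq_def by (simp add: power_add algebra_simps)

lemma Fq_Suc_mono: "q \<ge> 1 \<Longrightarrow> Fq q t \<le> Fq q (Suc t)"
proof -
  assume q: "q \<ge> 1"
  have "Fq q (Suc t) - Fq q t = (q - 1) * (q ^ t - 1)" unfolding Fq_def by (simp add: algebra_simps)
  also have "\<dots> \<ge> 0" using q by (simp add: one_le_power)
  finally show ?thesis by simp
qed

lemma Fq_mono: "q \<ge> 1 \<Longrightarrow> s \<le> t \<Longrightarrow> Fq q s \<le> Fq q t"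
  using lift_Suc_mono_le[of "Fq q"] Fq_Suc_mono by blast

lemma Fq_nonneg: "q \<ge> 1 \<Longrightarrow> Fq q t \<ge> 0"
  using Fq_mono[of q 0 t] by (simp add: Fq_def)

definition hh :: "nat \<Rightarrow> real \<Rightarrow> real \<Rightarrow> bool list set \<Rightarrow> bool list \<Rightarrow> real" where
  "hh n p q C x = q ^ list_size n p C x - 1"

definition Psi :: "nat \<Rightarrow> real \<Rightarrow> real \<Rightarrow> bool list set \<Rightarrow> real" where
  "Psi n p q C = (\<Sum>x\<in>vecs n. Fq q (list_size n p C x))"

definition cross :: "nat \<Rightarrow> real \<Rightarrow> real \<Rightarrow> bool list set \<Rightarrow> bool list \<Rightarrow> real" where
  "cross n p q C b = (\<Sum>x\<in>vecs n. hh n p q C x * hh n p q C (xorv x b))"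

definition Bad :: "nat \<Rightarrow> real \<Rightarrow> real \<Rightarrow> real \<Rightarrow> bool list set \<Rightarrow> bool list \<Rightarrow> bool" where
  "Bad n p q T C b \<longleftrightarrow> cross n p q C b > T * (\<Sum>x\<in>vecs n. hh n p q C x)\<^sup>2 / 2 ^ n"

lemma hh_nonneg: "q \<ge> 1 \<Longrightarrow> hh n p q C x \<ge> 0"
  unfolding hh_def by (simp add: one_le_power)

lemma xorv_bij2: "x \<in> vecs n \<Longrightarrow> bij_betw (\<lambda>b. xorv x b) (vecs n) (vecs n)"
  apply (rule bij_betwI[where g="\<lambda>b. xorv x b"])
  by (auto simp: xorv_cancel2)

lemma psi_step:
  assumes "C \<subseteq> vecs n" "b \<in> vecs n" "q \<ge> 1"
  shows "Psi n p q (C \<union> xorv b ` C) \<le> 2 * Psi n p q C + cross n p q C b"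
proof -
  let ?L = "list_size n p C"
  have "Psi n p q (C \<union> xorv b ` C) \<le> (\<Sum>x\<in>vecs n. Fq q (?L x + ?L (xorv x b)))"
    unfolding Psi_def using assms by (intro sum_mono Fq_mono ls_update) auto
  also have "\<dots> = (\<Sum>x\<in>vecs n. Fq q (?L x)) + (\<Sum>x\<in>vecs n. Fq q (?L (xorv x b))) + cross n p q C b"
    unfolding Fq_add cross_def hh_def by (simp add: sum.distrib)
  also have "(\<Sum>x\<in>vecs n. Fq q (?L (xorv x b))) = (\<Sum>x\<in>vecs n. Fq q (?L x))"
    using sum.reindex_bij_betw[OF xorv_bij[OF assms(2)], of "\<lambda>x. Fq q (?L x)"] by simp
  finally show ?thesis unfolding Psi_def by simp
qed

lemma sum_hh: "(\<Sum>x\<in>vecs n. hh n p q C x) = Psi n p q C + (q - 1) * real (\<Sum>x\<in>vecs n. list_size n p C x)"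
  unfolding hh_def Psi_def Fq_def by (simp add: sum.distrib sum_distrib_left sum_subtractf)

lemma cross_sum: "(\<Sum>b\<in>vecs n. cross n p q C b) = (\<Sum>x\<in>vecs n. hh n p q C x)\<^sup>2"
proof -
  let ?h = "hh n p q C"
  have "(\<Sum>b\<in>vecs n. cross n p q C b) = (\<Sum>x\<in>vecs n. ?h x * (\<Sum>b\<in>vecs n. ?h (xorv x b)))"
    unfolding cross_def by (subst sum.swap) (simp add: sum_distrib_left)
  also have "\<dots> = (\<Sum>x\<in>vecs n. ?h x * (\<Sum>y\<in>vecs n. ?h y))"
  proof (rule sum.cong[OF refl])
    fix x assume "x \<in> vecs n"
    then show "?h x * (\<Sum>b\<in>vecs n. ?h (xorv x b)) = ?h x * (\<Sum>y\<in>vecs n. ?h y)"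
      using sum.reindex_bij_betw[OF xorv_bij2, of x n ?h] by simp
  qed
  also have "\<dots> = (\<Sum>x\<in>vecs n. ?h x)\<^sup>2" by (simp add: sum_distrib_right[symmetric] power2_eq_square)
  finally show ?thesis .
qed

lemma markov_bad:
  assumes "q \<ge> 1" "T > 0"
  shows "real (card {b \<in> vecs n. Bad n p q T C b}) \<le> 2 ^ n / T"
proof -
  let ?S = "(\<Sum>x\<in>vecs n. hh n p q C x)"
  let ?M = "T * ?S\<^sup>2 / 2 ^ n"
  let ?B = "{b \<in> vecs n. Bad n p q T C b}"
  have cnn: "\<And>b. cross n p q C b \<ge> 0" unfolding cross_def
    using hh_nonneg[OF assms(1)] by (intro sum_nonneg mult_nonneg_nonneg) auto
  have "(\<Sum>b\<in>?B. ?M) \<le> (\<Sum>b\<in>?B. cross n p q C b)"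
    by (intro sum_mono) (auto simp: Bad_def)
  also have "\<dots> \<le> (\<Sum>b\<in>vecs n. cross n p q C b)"
    using cnn by (intro sum_mono2) auto
  also have "\<dots> = ?S\<^sup>2" by (rule cross_sum)
  finally have 1: "real (card ?B) * ?M \<le> ?S\<^sup>2" by simp
  show ?thesis
  proof (cases "?S\<^sup>2 = 0")
    case True
    have "\<forall>b\<in>vecs n. cross n p q C b = 0" using cross_sum[of n p q C] True cnn
      by (simp add: sum_nonneg_eq_0_iff)
    then have "?B = {}" using True by (auto simp: Bad_def)
    then have "card ?B = 0" by (simp only: card.empty)
    then show ?thesis using assms(2) by simp
  next
    case False
    then have pos: "?S\<^sup>2 > 0" by simp
    have "real (card ?B) * T * ?S\<^sup>2 \<le> 2 ^ n * ?S\<^sup>2" using 1 by (simp add: field_simps)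
    then have "real (card ?B) * T \<le> 2 ^ n" using pos by (simp add: mult.assoc)
    then show ?thesis using assms(2) by (simp add: field_simps)
  qed
qed

definition good :: "nat \<Rightarrow> real \<Rightarrow> real \<Rightarrow> real \<Rightarrow> bool list list \<Rightarrow> bool" where
  "good n p q T bs \<longleftrightarrow> (\<forall>i<length bs. \<not> Bad n p q T (lin_span n (take i bs)) (bs ! i))"

lemma good_snoc: "good n p q T (bs @ [b]) \<longleftrightarrow> good n p q T bs \<and> \<not> Bad n p q T (lin_span n bs) b"
  unfolding good_def by (auto simp: nth_append less_Suc_eq)

definition Lk :: "nat \<Rightarrow> nat \<Rightarrow> bool list list set" where
  "Lk n k = {bs. set bs \<subseteq> vecs n \<and> length bs = k}"

lemma finite_Lk[simp]: "finite (Lk n k)"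
  unfolding Lk_def by (rule finite_lists_length_eq) simp

lemma card_Lk: "card (Lk n k) = (2 ^ n) ^ k"
  unfolding Lk_def by (simp add: card_lists_length_eq card_vecs)

lemma Lk_Suc: "Lk n (Suc k) = (\<lambda>(bs, b). bs @ [b]) ` (Lk n k \<times> vecs n)"
proof
  show "Lk n (Suc k) \<subseteq> (\<lambda>(bs, b). bs @ [b]) ` (Lk n k \<times> vecs n)"
  proof
    fix xs assume xs: "xs \<in> Lk n (Suc k)"
    then have "xs \<noteq> []" by (auto simp: Lk_def)
    then have "xs = butlast xs @ [last xs]" by simp
    moreover have "butlast xs \<in> Lk n k" "last xs \<in> vecs n" using xs \<open>xs \<noteq> []\<close>
      by (auto simp: Lk_def in_set_butlastD simp del: vecs_len)
    ultimately show "xs \<in> (\<lambda>(bs, b). bs @ [b]) ` (Lk n k \<times> vecs n)" by force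
  qed
qed (auto simp: Lk_def simp del: vecs_len)

lemma count_bad:
  assumes "q \<ge> 1" "T > 0"
  shows "real (card {bs \<in> Lk n k. \<not> good n p q T bs}) \<le> real k * (2 ^ n) ^ k / T"
proof (induction k)
  case 0
  have "{bs \<in> Lk n 0. \<not> good n p q T bs} = {}" by (auto simp: Lk_def good_def)
  then show ?case by simp
next
  case (Suc k)
  let ?A = "{bs \<in> Lk n k. \<not> good n p q T bs} \<times> vecs n"
  let ?S = "Sigma (Lk n k) (\<lambda>bs. {b \<in> vecs n. Bad n p q T (lin_span n bs) b})"
  have sub: "{bs \<in> Lk n (Suc k). \<not> good n p q T bs} \<subseteq> (\<lambda>(bs, b). bs @ [b]) ` (?A \<union> ?S)"
    unfolding Lk_Suc by (auto simp: good_snoc)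
  have fin: "finite (?A \<union> ?S)"
    by (intro finite_UnI finite_cartesian_product finite_SigmaI) (auto simp del: vecs_len)
  have "card {bs \<in> Lk n (Suc k). \<not> good n p q T bs} \<le> card ((\<lambda>(bs, b). bs @ [b]) ` (?A \<union> ?S))"
    by (rule card_mono[OF finite_imageI[OF fin] sub])
  also have "\<dots> \<le> card (?A \<union> ?S)" by (rule card_image_le[OF fin])
  also have "\<dots> \<le> card ?A + card ?S" by (rule card_Un_le)
  finally have 1: "real (card {bs \<in> Lk n (Suc k). \<not> good n p q T bs}) \<le> real (card ?A) + real (card ?S)"
    by linarith
  have 2: "real (card ?A) = real (card {bs \<in> Lk n k. \<not> good n p q T bs}) * 2 ^ n"
    by (simp add: card_cartesian_product card_vecs)
  have "card ?S = (\<Sum>bs\<in>Lk n k. card {b \<in> vecs n. Bad n p q T (lin_span n bs) b})"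
    by (rule card_SigmaI) (auto simp del: vecs_len)
  then have "real (card ?S) = (\<Sum>bs\<in>Lk n k. real (card {b \<in> vecs n. Bad n p q T (lin_span n bs) b}))"
    by simp
  also have "\<dots> \<le> (\<Sum>bs\<in>Lk n k. 2 ^ n / T)" by (intro sum_mono markov_bad assms)
  also have "\<dots> = (2 ^ n) ^ k * 2 ^ n / T" by (simp add: card_Lk)
  finally have 3: "real (card ?S) \<le> (2 ^ n) ^ k * 2 ^ n / T" .
  have "real (card {bs \<in> Lk n (Suc k). \<not> good n p q T bs}) \<le> real k * (2 ^ n) ^ k / T * 2 ^ n + (2 ^ n) ^ k * 2 ^ n / T"
  proof -
    have "real (card ?A) \<le> real k * (2 ^ n) ^ k / T * 2 ^ n"
      unfolding 2 using Suc.IH by (intro mult_right_mono) auto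
    then show ?thesis using 1 3 by linarith
  qed
  also have "\<dots> = real (Suc k) * (2 ^ n) ^ Suc k / T" using assms(2) by (simp add: field_simps)
  finally show ?case .
qed

lemma invariant:
  assumes q: "q \<ge> 1" and T: "T > 0" and U: "U \<ge> 0"
    and ball: "\<And>c. c \<in> vecs n \<Longrightarrow> real (card (hball n c (p * real n))) \<le> U"
    and dK: "2 * T * q\<^sup>2 * U\<^sup>2 / 2 ^ n * 2 ^ K \<le> q * U"
  shows "set bs \<subseteq> vecs n \<Longrightarrow> length bs \<le> K \<Longrightarrow> good n p q T bs \<Longrightarrow>
     Psi n p q (lin_span n bs) \<le> real (card (lin_span n bs)) * (2 * T * q\<^sup>2 * U\<^sup>2 / 2 ^ n) * (2 ^ length bs - 1)"
proof (induction bs rule: rev_induct)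
  case Nil
  have le1: "list_size n p {replicate n False} x \<le> 1" for x
  proof -
    have "card (hball n x (p * real n) \<inter> {replicate n False}) \<le> card {replicate n False}"
      by (intro card_mono) auto
    then show ?thesis unfolding list_size_def by simp
  qed
  have "Fq q (list_size n p {replicate n False} x) = 0" for x
  proof -
    have "list_size n p {replicate n False} x = 0 \<or> list_size n p {replicate n False} x = 1"
      using le1[of x] by linarith
    then show ?thesis by (auto simp: Fq_def)
  qed
  then show ?case by (simp add: lin_span_Nil Psi_def)
next
  case (snoc b bs)
  define \<delta> where "\<delta> = 2 * T * q\<^sup>2 * U\<^sup>2 / 2 ^ n"
  let ?C = "lin_span n bs"
  let ?i = "length bs"
  have bn: "b \<in> vecs n" and bsV: "set bs \<subseteq> vecs n" using snoc.prems by auto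
  have iK: "?i < K" using snoc.prems by simp
  have gb: "good n p q T bs" and nb: "\<not> Bad n p q T ?C b" using snoc.prems(3) good_snoc by auto
  have IH: "Psi n p q ?C \<le> real (card ?C) * \<delta> * (2 ^ ?i - 1)"
    using snoc.IH bsV iK gb \<delta>_def by simp
  have CV: "?C \<subseteq> vecs n" by (rule lin_span_vecs)
  have cl: "closedx ?C" by (rule lin_span_closed[OF bsV])
  have d0: "\<delta> \<ge> 0" unfolding \<delta>_def using T by simp
  have Ci: "real (card ?C) \<le> 2 ^ ?i" proof -
    have "card ?C \<le> 2 ^ ?i" by (rule card_lin_span[OF bsV])
    then have "real (card ?C) \<le> real (2 ^ ?i)" by (simp only: of_nat_le_iff)
    then show ?thesis by simp
  qed
  have bnd: "\<delta> * (2 ^ ?i - 1) \<le> q * U"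
  proof -
    have "\<delta> * (2 ^ ?i - 1) \<le> \<delta> * 2 ^ K" using d0 iK
      by (intro mult_left_mono) (auto intro: order.trans[OF _ power_increasing[of ?i K "2::real"]])
    then show ?thesis using dK \<delta>_def by simp
  qed
  have bl: "length b = n" using bn by simp
  show ?case
  proof (cases "b \<in> ?C")
    case True
    have eq: "lin_span n (bs @ [b]) = ?C" unfolding lin_span_snoc[OF bl] using card_snoc(1)[OF cl CV _ bn True] by simp
    have "real (card ?C) * \<delta> * (2 ^ ?i - 1) \<le> real (card ?C) * \<delta> * (2 ^ Suc ?i - 1)"
      using d0 by (intro mult_left_mono) auto
    then show ?thesis using IH eq \<delta>_def by simp
  next
    case False
    have eqc: "card (lin_span n (bs @ [b])) = 2 * card ?C"
      unfolding lin_span_snoc[OF bl] using card_snoc(2)[OF cl CV _ bn False] by simp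
    let ?S = "\<Sum>x\<in>vecs n. hh n p q ?C x"
    have S0: "?S \<ge> 0" using hh_nonneg[OF q] by (simp add: sum_nonneg)
    have "?S = Psi n p q ?C + (q - 1) * real (\<Sum>x\<in>vecs n. list_size n p ?C x)" by (rule sum_hh)
    also have "\<dots> \<le> real (card ?C) * \<delta> * (2 ^ ?i - 1) + (q - 1) * (real (card ?C) * U)"
      using IH ls_sum[OF CV ball] q by (intro add_mono mult_left_mono) auto
    also have "\<dots> \<le> real (card ?C) * (q * U) + q * (real (card ?C) * U)"
      using bnd U by (intro add_mono mult_right_mono) (auto simp: mult.assoc intro: mult_left_mono)
    finally have S1: "?S \<le> 2 * real (card ?C) * q * U" by (simp add: algebra_simps)
    have "?S\<^sup>2 \<le> (2 * real (card ?C) * q * U)\<^sup>2" using S1 S0 by (rule power_mono)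
    then have "T * ?S\<^sup>2 / 2 ^ n \<le> T * (2 * real (card ?C) * q * U)\<^sup>2 / 2 ^ n"
      using T by (intro divide_right_mono mult_left_mono) auto
    also have "\<dots> = 2 * real (card ?C) * \<delta> * real (card ?C)"
      unfolding \<delta>_def by (simp add: power2_eq_square field_simps)
    also have "\<dots> \<le> 2 * real (card ?C) * \<delta> * 2 ^ ?i"
      using Ci d0 by (intro mult_left_mono) auto
    finally have cr: "cross n p q ?C b \<le> 2 * real (card ?C) * \<delta> * 2 ^ ?i"
      using nb unfolding Bad_def by linarith
    have "Psi n p q (lin_span n (bs @ [b])) \<le> 2 * Psi n p q ?C + cross n p q ?C b"
      unfolding lin_span_snoc[OF bl] by (rule psi_step[OF CV bn q])
    also have "\<dots> \<le> 2 * (real (card ?C) * \<delta> * (2 ^ ?i - 1)) + 2 * real (card ?C) * \<delta> * 2 ^ ?i"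
      using IH cr by linarith
    also have "\<dots> = real (card (lin_span n (bs @ [b]))) * \<delta> * (2 ^ length (bs @ [b]) - 1)"
      unfolding eqc by (simp add: algebra_simps)
    finally show ?thesis unfolding \<delta>_def .
  qed
qed

lemma psi_lower:
  assumes "q \<ge> 1" "closedx C" "C \<subseteq> vecs n" "x \<in> vecs n"
  shows "real (card C) * Fq q (list_size n p C x) \<le> Psi n p q C"
proof -
  have inj: "inj_on (xorv x) C"
  proof (rule inj_onI)
    fix u v assume "u \<in> C" "v \<in> C" "xorv x u = xorv x v"
    then show "u = v" using assms(3,4) xorv_inj[of u x v] by (auto simp del: vecs_len simp: vecs_def)
  qed
  have sub: "xorv x ` C \<subseteq> vecs n" using assms(3,4) by (auto simp del: vecs_len)
  have "real (card C) * Fq q (list_size n p C x) = (\<Sum>c\<in>C. Fq q (list_size n p C x))" by simp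
  also have "\<dots> \<le> (\<Sum>c\<in>C. Fq q (list_size n p C (xorv x c)))"
  proof (rule sum_mono)
    fix c assume c: "c \<in> C"
    then have "list_size n p C x \<le> list_size n p C (xorv x c)" using ls_translate assms by blast
    then show "Fq q (list_size n p C x) \<le> Fq q (list_size n p C (xorv x c))" using Fq_mono assms(1) by blast
  qed
  also have "\<dots> = (\<Sum>y\<in>xorv x ` C. Fq q (list_size n p C y))" by (simp add: sum.reindex[OF inj])
  also have "\<dots> \<le> Psi n p q C" unfolding Psi_def
    using sub Fq_nonneg[OF assms(1)] by (intro sum_mono2) auto
  finally show ?thesis .
qed

lemma entropy_pos:
  assumes "0 < p" "p < 1"
  shows "bin_entropy p > 0"
proof -
  have a: "log 2 p < 0" using assms by simp
  have b: "log 2 (1 - p) < 0" using assms by simp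
  have "- p * log 2 p > 0" using a assms by (simp add: mult_pos_neg)
  moreover have "(1 - p) * log 2 (1 - p) < 0" using b assms by (intro mult_pos_neg) auto
  ultimately show ?thesis unfolding bin_entropy_def by linarith
qed

lemma Fq_lower:
  assumes "q \<ge> 4" "m \<ge> 2"
  shows "q ^ m / 2 \<le> Fq q m"
proof -
  have p4: "(4::real) ^ (m - 1) \<ge> 2 * real m" using assms(2)
  proof (induction m rule: dec_induct)
    case base then show ?case by simp
  next
    case (step j)
    then have "(4::real) ^ (Suc j - 1) = 4 * 4 ^ (j - 1)" by (cases j) auto
    then show ?case using step by simp
  qed
  have "q ^ (m - 1) \<ge> 4 ^ (m - 1)" using assms(1) by (intro power_mono) auto
  then have qm1: "q ^ (m - 1) \<ge> 2 * real m" using p4 by linarith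
  have m1: "q ^ m = q * q ^ (m - 1)" using assms(2) by (cases m) auto
  have "q ^ m \<ge> q * (2 * real m)" unfolding m1 using qm1 assms(1) by (intro mult_left_mono) auto
  moreover have "1 + (q - 1) * real m \<le> q * real m" using assms by (simp add: algebra_simps)
  ultimately show ?thesis unfolding Fq_def by (simp add: algebra_simps)
qed

lemma ev_ge: "eventually (\<lambda>n. a \<le> real n) sequentially"
proof -
  obtain N :: nat where "a \<le> real N" using real_arch_simple by blast
  then show ?thesis unfolding eventually_sequentially by (metis of_nat_le_iff order_trans)
qed

lemma ev_pow:
  assumes "g > 0"
  shows "eventually (\<lambda>n. real n \<le> 2 powr (g * real n / 4)) sequentially"
proof -
  have "((\<lambda>n. real n / 2 powr (g * real n / 4)) \<longlongrightarrow> 0) sequentially"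
    using assms by real_asymp
  then have "eventually (\<lambda>n. real n / 2 powr (g * real n / 4) < 1) sequentially"
    by (rule order_tendstoD) simp
  then show ?thesis by eventually_elim (simp add: field_simps)
qed

theorem theorem3:
  fixes \<epsilon> :: real
  assumes "\<epsilon> > 0"
  shows "\<exists>c > 0. \<forall>p. 0 < p \<and> p < 1/2 \<longrightarrow>
           (\<exists>N. \<forall>n k. n \<ge> N \<and> real k = (1 - bin_entropy p - \<epsilon>) * real n \<longrightarrow>
              measure_pmf.prob (random_gens n k)
                 {bs. list_decodable n p (bin_entropy p / \<epsilon> + 2) (lin_span n bs)}
               \<ge> 1 - exp (- c * real n))"
proof -
  define e where "e = min \<epsilon> 1"
  define \<gamma> where "\<gamma> = e\<^sup>2 / 2"
  define c where "c = \<gamma> * ln 2 / 4"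
  have e0: "0 < e" "e \<le> 1" "e \<le> \<epsilon>" using assms by (auto simp: e_def)
  have g0: "\<gamma> > 0" using e0 by (simp add: \<gamma>_def)
  have ge: "\<gamma> \<le> e / 2" using e0 by (simp add: \<gamma>_def power2_eq_square mult_left_le)
  have c0: "c > 0" using g0 by (simp add: c_def)
  show ?thesis
  proof (intro exI[of _ c] conjI allI impI)
    show "c > 0" by (rule c0)
    fix p :: real assume p: "0 < p \<and> p < 1/2"
    define H where "H = bin_entropy p"
    have H0: "H > 0" unfolding H_def using p by (intro entropy_pos) auto
    have ev1: "eventually (\<lambda>n. 1 \<le> real n) sequentially" by (rule ev_ge)
    have ev2: "eventually (\<lambda>n. 1 \<le> \<gamma> * real n / 2) sequentially"
      using ev_ge[of "2 / \<gamma>"] by eventually_elim (use g0 in \<open>simp add: field_simps\<close>)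
    have egp: "e - \<gamma> > 0" using ge e0 by linarith
    have ev3: "eventually (\<lambda>n. 2 \<le> (e - \<gamma>) * real n) sequentially"
      using ev_ge[of "2 / (e - \<gamma>)"] by eventually_elim (use egp in \<open>simp add: field_simps\<close>)
    have ev4: "eventually (\<lambda>n. 8 \<le> e * real n) sequentially"
      using ev_ge[of "8 / e"] by eventually_elim (use e0 in \<open>simp add: field_simps\<close>)
    have ev5: "eventually (\<lambda>n. real n \<le> 2 powr (\<gamma> * real n / 4)) sequentially"
      by (rule ev_pow[OF g0])
    have "eventually (\<lambda>n. 1 \<le> real n \<and> 1 \<le> \<gamma> * real n / 2 \<and> 2 \<le> (e - \<gamma>) * real n
        \<and> 8 \<le> e * real n \<and> real n \<le> 2 powr (\<gamma> * real n / 4)) sequentially"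
      using ev1 ev2 ev3 ev4 ev5 by eventually_elim auto
    then obtain N where N: "\<And>n. n \<ge> N \<Longrightarrow> 1 \<le> real n \<and> 1 \<le> \<gamma> * real n / 2 \<and> 2 \<le> (e - \<gamma>) * real n
        \<and> 8 \<le> e * real n \<and> real n \<le> 2 powr (\<gamma> * real n / 4)"
      unfolding eventually_sequentially by blast
    show "\<exists>N. \<forall>n k. n \<ge> N \<and> real k = (1 - bin_entropy p - \<epsilon>) * real n \<longrightarrow>
              measure_pmf.prob (random_gens n k)
                 {bs. list_decodable n p (bin_entropy p / \<epsilon> + 2) (lin_span n bs)}
               \<ge> 1 - exp (- c * real n)"
      unfolding H_def[symmetric]
    proof (intro exI[of _ N] allI impI)
      fix n k assume nk: "n \<ge> N \<and> real k = (1 - H - \<epsilon>) * real n"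
      have C1: "1 \<le> real n" and C2: "1 \<le> \<gamma> * real n / 2" and C3: "2 \<le> (e - \<gamma>) * real n"
        and C4: "8 \<le> e * real n" and C5: "real n \<le> 2 powr (\<gamma> * real n / 4)" using N nk by auto
      have kdef: "real k = (1 - H - \<epsilon>) * real n" using nk by simp
      have "(1 - H - \<epsilon>) * real n \<ge> 0" using kdef by (metis of_nat_0_le_iff)
      then have HE: "1 - H - \<epsilon> \<ge> 0" using C1 by (simp add: zero_le_mult_iff)
      then have eps1: "\<epsilon> < 1" using H0 by linarith
      then have ee: "e = \<epsilon>" by (simp add: e_def)
      have H1: "H \<le> 1" using HE assms by linarith
      have kn': "real k = real n - H * real n - \<epsilon> * real n" using kdef by (simp add: algebra_simps)
      have "H * real n \<ge> 0" "\<epsilon> * real n \<ge> 0" using H0 assms by auto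
      then have kn: "real k \<le> real n" using kn' by linarith
      define s where "s = (\<epsilon> - \<gamma>) * real n"
      define q where "q = (2::real) powr s"
      define T where "T = (2::real) powr (\<gamma> * real n / 2)"
      define U where "U = (2::real) powr (H * real n)"
      define \<delta> where "\<delta> = 2 * T * q\<^sup>2 * U\<^sup>2 / 2 ^ n"
      have s2: "s \<ge> 2" using C3 ee by (simp add: s_def)
      have q4: "q \<ge> 4"
      proof -
        have "(2::real) powr 2 \<le> 2 powr s" using s2 by (intro powr_mono) auto
        then show ?thesis by (simp add: q_def)
      qed
      have q1: "q \<ge> 1" using q4 by simp
      have T0: "T > 0" by (simp add: T_def)
      have U0: "U \<ge> 0" by (simp add: U_def)
      have ball: "\<And>c. c \<in> vecs n \<Longrightarrow> real (card (hball n c (p * real n))) \<le> U"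
        unfolding U_def H_def using p by (intro ball_bound) auto
      have pw2: "\<And>a. ((2::real) powr a)\<^sup>2 = 2 powr (2 * a)"
        by (simp add: power2_eq_square powr_add[symmetric])
      have pwn: "\<And>m. (2::real) ^ m = 2 powr (real m)" by (simp add: powr_realpow)
      have deq: "\<delta> * 2 ^ k = 2 powr (1 + \<gamma> * real n / 2 + 2 * s + 2 * (H * real n) - real n + real k)"
      proof -
        have "\<delta> * 2 ^ k = 2 powr 1 * 2 powr (\<gamma> * real n / 2) * 2 powr (2 * s) * 2 powr (2 * (H * real n))
            / 2 powr (real n) * 2 powr (real k)"
          unfolding \<delta>_def T_def q_def U_def pw2 pwn by simp
        also have "\<dots> = 2 powr (1 + \<gamma> * real n / 2 + 2 * s + 2 * (H * real n) - real n + real k)"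
          by (simp add: powr_add powr_diff)
        finally show ?thesis .
      qed
      have qU: "q * U = 2 powr (s + H * real n)" by (simp add: q_def U_def powr_add)
      have dK: "2 * T * q\<^sup>2 * U\<^sup>2 / 2 ^ n * 2 ^ k \<le> q * U"
        unfolding \<delta>_def[symmetric] deq qU
        using C2 kn' by (intro powr_mono) (auto simp: s_def algebra_simps)
      have d0: "\<delta> > 0" unfolding \<delta>_def using T0 q4 by (simp add: U_def)
      have det: "list_decodable n p (H / \<epsilon> + 2) (lin_span n bs)"
        if bs: "bs \<in> Lk n k" "good n p q T bs" for bs
      proof -
        let ?C = "lin_span n bs"
        have bsV: "set bs \<subseteq> vecs n" and lbs: "length bs = k" using bs by (auto simp: Lk_def)
        have inv: "Psi n p q ?C \<le> real (card ?C) * \<delta> * (2 ^ k - 1)"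
          using invariant[OF q1 T0 U0 ball dK bsV _ bs(2)] lbs \<delta>_def by simp
        show ?thesis unfolding list_decodable_def
        proof
          fix x assume x: "x \<in> vecs n"
          show "real (list_size n p ?C x) \<le> H / \<epsilon> + 2"
          proof (rule ccontr)
            let ?m = "list_size n p ?C x"
            assume "\<not> real ?m \<le> H / \<epsilon> + 2"
            then have mbig: "real ?m > H / \<epsilon> + 2" by simp
            have "H / \<epsilon> \<ge> 0" using H0 assms by simp
            then have m2: "?m \<ge> 2" using mbig by linarith
            have "real (card ?C) * Fq q ?m \<le> Psi n p q ?C"
              by (rule psi_lower[OF q1 lin_span_closed[OF bsV] lin_span_vecs x])
            also have "\<dots> \<le> real (card ?C) * (\<delta> * (2 ^ k - 1))" using inv by (simp add: mult.assoc)
            finally have "Fq q ?m \<le> \<delta> * (2 ^ k - 1)"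
              using card_lin_span_pos[of n bs] by (simp add: mult_le_cancel_left_pos)
            also have "\<dots> < \<delta> * 2 ^ k" using d0 by simp
            finally have up: "Fq q ?m < 2 powr (1 + \<gamma> * real n / 2 + 2 * s + 2 * (H * real n) - real n + real k)"
              using deq by simp
            have qe: "q ^ ?m = 2 powr (s * real ?m)"
              unfolding q_def by (simp add: powr_realpow[symmetric] powr_powr)
            have aa: "2 powr (s * (H / \<epsilon> + 2)) \<le> 2 powr (s * real ?m)"
              using mbig s2 by (intro powr_mono mult_left_mono) auto
            have fl: "q ^ ?m / 2 \<le> Fq q ?m" by (rule Fq_lower[OF q4 m2])
            have "2 powr (s * (H / \<epsilon> + 2)) / 2 \<le> Fq q ?m"
              using qe aa fl by linarith
            then have low: "2 powr (s * (H / \<epsilon> + 2) - 1) \<le> Fq q ?m" by (simp add: powr_diff)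
            have "1 + \<gamma> * real n / 2 + 2 * s + 2 * (H * real n) - real n + real k \<le> s * (H / \<epsilon> + 2) - 1"
            proof -
              have a1: "s * (H / \<epsilon> + 2) = H * real n - \<epsilon> * H * real n / 2 + 2 * s"
                using assms unfolding s_def \<gamma>_def ee[symmetric] by (simp add: field_simps power2_eq_square)
              have a2: "\<gamma> * real n / 2 \<le> \<epsilon> * real n / 4"
                using ge ee C1 by (simp add: field_simps)
              have a3: "\<epsilon> * H * real n / 2 \<le> \<epsilon> * real n / 2"
                using H1 assms C1 by (simp add: field_simps mult_left_le)
              have a4: "s = \<epsilon> * real n - \<gamma> * real n" by (simp add: s_def algebra_simps)
              have a5: "8 \<le> \<epsilon> * real n" using C4 ee by simp
              show ?thesis using a1 a2 a3 a4 kn' a5 by linarith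
            qed
            then have "2 powr (1 + \<gamma> * real n / 2 + 2 * s + 2 * (H * real n) - real n + real k)
                \<le> 2 powr (s * (H / \<epsilon> + 2) - 1)" by (intro powr_mono) auto
            then show False using up low by linarith
          qed
        qed
      qed
      have Lk_eq: "{bs. length bs = k \<and> (\<forall>b\<in>set bs. b \<in> vecs n)} = Lk n k"
        by (auto simp: Lk_def simp del: vecs_len)
      have ne: "Lk n k \<noteq> {}"
      proof -
        have "replicate k (replicate n False) \<in> Lk n k" by (auto simp: Lk_def)
        then show ?thesis by auto
      qed
      let ?E = "{bs. list_decodable n p (H / \<epsilon> + 2) (lin_span n bs)}"
      let ?G = "{bs \<in> Lk n k. good n p q T bs}"
      let ?B = "{bs \<in> Lk n k. \<not> good n p q T bs}"
      have prob: "measure_pmf.prob (random_gens n k) ?E = real (card (Lk n k \<inter> ?E)) / real (card (Lk n k))"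
        unfolding random_gens_def Lk_eq using ne by (simp add: measure_pmf_of_set)
      have "?G \<subseteq> Lk n k \<inter> ?E" using det by auto
      then have cG: "card ?G \<le> card (Lk n k \<inter> ?E)" by (intro card_mono) auto
      have "card (Lk n k) = card (?G \<union> ?B)" by (intro arg_cong[where f=card]) auto
      also have "\<dots> = card ?G + card ?B" by (intro card_Un_disjoint) auto
      finally have cL: "real (card (Lk n k)) = real (card ?G) + real (card ?B)" by simp
      have cLp: "real (card (Lk n k)) = (2 ^ n) ^ k" by (simp add: card_Lk)
      have cB: "real (card ?B) \<le> real k * (2 ^ n) ^ k / T" by (rule count_bad[OF q1 T0])
      have pos: "real (card (Lk n k)) > 0" using cLp by simp
      have "1 - real k / T \<le> real (card ?G) / real (card (Lk n k))"
      proof -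
        have "real (card ?G) = real (card (Lk n k)) - real (card ?B)" using cL by simp
        also have "\<dots> \<ge> real (card (Lk n k)) - real k * real (card (Lk n k)) / T" using cB cLp by simp
        finally have "real (card ?G) \<ge> real (card (Lk n k)) * (1 - real k / T)" by (simp add: algebra_simps)
        then have "real (card ?G) / real (card (Lk n k)) \<ge> real (card (Lk n k)) * (1 - real k / T) / real (card (Lk n k))"
          using pos by (intro divide_right_mono) auto
        then show ?thesis using pos ne by simp
      qed
      also have "\<dots> \<le> measure_pmf.prob (random_gens n k) ?E"
        unfolding prob using cG pos by (intro divide_right_mono) auto
      finally have pr: "1 - real k / T \<le> measure_pmf.prob (random_gens n k) ?E" .
      have "real k / T \<le> 2 powr (\<gamma> * real n / 4) / T"
        using kn C5 T0 by (intro divide_right_mono) auto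
      also have "\<dots> = 2 powr (- (\<gamma> * real n / 4))"
        unfolding T_def by (simp add: powr_diff[symmetric])
      also have "\<dots> = exp (- c * real n)"
        unfolding c_def powr_def by simp
      finally show "1 - exp (- c * real n) \<le> measure_pmf.prob (random_gens n k) ?E"
        using pr by linarith
    qed
  qed
qed

end
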